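(* Let $D\in\mathbb{D}^n_+$, $W\in\mathbb{R}^{n\times n}$, $u\in\mathbb{R}^n$, $A:=W-D$, and $\mathcal X=\{x\in\mathbb{R}^n: Dx\in[0,1]^n\}$. (i) A point $x\in\mathcal X$ is an equilibrium of the hard-selector inclusion $x'\in-Dx+\mathcal H(Ax+u)$ (i.e. $0\in-Dx+\mathcal H(Ax+u)$) if and only if it is an equilibrium of the linear-threshold network $\dot x=-Dx+[Wx+u]_0^1$; consequently all members of the family $\dot x=\frac1\tau\left(-Dx+[Dx+\tau(Ax+u)]_0^1\right)$, $\tau>0$, the projected dynamical system $\dot x=\Pi_{\mathcal X}(x,Ax+u)$, and the hard-selector inclusion share the same equilibria in $\mathcal X$. (ii) If $A$ is Lyapunov diagonally stable, the hard-selector inclusion admits a unique equilibrium.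
   Context: $\mathbb{D}^n_+$ is the set of positive diagonal matrices; $[z]_0^1=\max(0,\min(z,1))$ elementwise. $h(z)=\{0\}$ if $z<0$, $[0,1]$ if $z=0$, $\{1\}$ if $z>0$, and $\mathcal H(x)=h(x_1)\times\cdots\times h(x_n)$. $\Pi_{\mathcal X}(x,v)$ is the Euclidean projection of $v$ onto the tangent cone of $\mathcal X$ at $x$. A matrix $M$ is Lyapunov diagonally stable if $M^\top\Lambda+\Lambda M\prec0$ for some $\Lambda\in\mathbb{D}^n_+$. *)

theory Defs
  imports "HOL-Analysis.Analysis"
begin

definition pos_diag :: "real^'n^'n \<Rightarrow> bool" where
  "pos_diag D \<longleftrightarrow> (\<forall>i j. i \<noteq> j \<longrightarrow> D $ i $ j = 0) \<and> (\<forall>i. D $ i $ i > 0)"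

definition clip01 :: "real^'n \<Rightarrow> real^'n" where
  "clip01 z = (\<chi> i. max 0 (min (z $ i) 1))"

definition hsel :: "real \<Rightarrow> real set" where
  "hsel z = (if z < 0 then {0} else if z = 0 then {0..1} else {1})"

definition Hsel :: "real^'n \<Rightarrow> (real^'n) set" where
  "Hsel x = {y. \<forall>i. y $ i \<in> hsel (x $ i)}"

definition tangent_cone :: "'a::real_normed_vector set \<Rightarrow> 'a \<Rightarrow> 'a set" where
  "tangent_cone S x = closure {c *\<^sub>R (y - x) | c y. c \<ge> 0 \<and> y \<in> S}"

definition proj_tangent :: "'a::euclidean_space set \<Rightarrow> 'a \<Rightarrow> 'a \<Rightarrow> 'a" where
  "proj_tangent S x v = closest_point (tangent_cone S x) v"

definition lyap_diag_stable :: "real^'n^'n \<Rightarrow> bool" where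
  "lyap_diag_stable M \<longleftrightarrow> (\<exists>L. pos_diag L \<and>
      (\<forall>z. z \<noteq> 0 \<longrightarrow> z \<bullet> ((transpose M ** L + L ** M) *v z) < 0))"

end

theory Submission
  imports Defs
begin

lemma diag_mv:
  assumes "pos_diag D"
  shows "(D *v x) $ i = D $ i $ i * x $ i"
proof -
  have "(D *v x) $ i = (\<Sum>j\<in>UNIV. D $ i $ j * x $ j)"
    by (simp add: matrix_vector_mult_def)
  also have "\<dots> = (\<Sum>j\<in>UNIV. if j = i then D $ i $ i * x $ i else 0)"
    by (rule sum.cong) (use assms in \<open>auto simp: pos_diag_def\<close>)
  also have "\<dots> = D $ i $ i * x $ i" by simp
  finally show ?thesis .
qed

lemma eq_char:
  "(0 \<in> (\<lambda>y. - (D *v x) + y) ` Hsel v) \<longleftrightarrow> (\<forall>i. (D *v x) $ i \<in> hsel (v $ i))"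
proof
  assume "0 \<in> (\<lambda>y. - (D *v x) + y) ` Hsel v"
  then obtain y where "y \<in> Hsel v" "0 = - (D *v x) + y" by auto
  then have "y = D *v x" by (metis add.commute add_minus_cancel add.right_neutral)
  then show "\<forall>i. (D *v x) $ i \<in> hsel (v $ i)" using \<open>y \<in> Hsel v\<close> by (simp add: Hsel_def)
next
  assume "\<forall>i. (D *v x) $ i \<in> hsel (v $ i)"
  then have "D *v x \<in> Hsel v" by (simp add: Hsel_def)
  then show "0 \<in> (\<lambda>y. - (D *v x) + y) ` Hsel v"
    by (rule rev_image_eqI) simp
qed

lemma scal_clip:
  fixes d a t :: real
  assumes "0 \<le> d" "d \<le> 1" "t > 0"
  shows "(max 0 (min (d + t * a) 1) = d) \<longleftrightarrow> d \<in> hsel a"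
proof -
  consider "a < 0" | "a = 0" | "a > 0" by linarith
  then show ?thesis
  proof cases
    case 1
    then have "t * a < 0" using assms by (simp add: mult_pos_neg)
    then show ?thesis using 1 assms by (auto simp: hsel_def)
  next
    case 2
    then show ?thesis using assms by (auto simp: hsel_def)
  next
    case 3
    then have "t * a > 0" using assms by simp
    then have "d + t * a > d" by simp
    have "d \<in> hsel a \<longleftrightarrow> d = 1" using 3 by (simp add: hsel_def)
    then show ?thesis using assms \<open>t * a > 0\<close> by (smt (verit))
  qed
qed

lemma hsel_01: "d \<in> hsel a \<Longrightarrow> 0 \<le> d \<and> d \<le> 1"
  by (auto simp: hsel_def split: if_splits)

lemma hsel_var: "d \<in> hsel a \<Longrightarrow> 0 \<le> e \<Longrightarrow> e \<le> 1 \<Longrightarrow> a * (e - d) \<le> 0"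
  by (auto simp: hsel_def mult_nonpos_nonneg mult_nonneg_nonpos split: if_splits)

lemma hsel_var_conv:
  assumes "0 \<le> d" "d \<le> 1" "\<And>e. 0 \<le> e \<Longrightarrow> e \<le> 1 \<Longrightarrow> a * (e - d) \<le> (0::real)"
  shows "d \<in> hsel a"
proof -
  have 1: "a * (1 - d) \<le> 0" and 0: "a * (0 - d) \<le> 0" using assms(3)[of 1] assms(3)[of 0] by auto
  consider "a < 0" | "a = 0" | "a > 0" by linarith
  then show ?thesis
  proof cases
    case 1
    with 0 have "d \<le> 0" by (smt (verit) mult_neg_neg)
    then show ?thesis using 1 assms by (auto simp: hsel_def)
  next
    case 2 then show ?thesis using assms by (auto simp: hsel_def)
  next
    case 3
    with 1 have "1 - d \<le> 0" by (simp add: mult_le_0_iff)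
    then show ?thesis using 3 assms by (auto simp: hsel_def)
  qed
qed

lemma hsel_mono: "d \<in> hsel a \<Longrightarrow> e \<in> hsel b \<Longrightarrow> 0 \<le> (d - e) * (a - b)"
  by (auto simp: hsel_def zero_le_mult_iff split: if_splits)

lemma var_char:
  assumes D: "pos_diag D"
    and xX: "x \<in> {x :: real^'n. \<forall>i. 0 \<le> (D *v x) $ i \<and> (D *v x) $ i \<le> 1}" (is "x \<in> ?X")
  shows "(\<forall>y\<in>?X. v \<bullet> (y - x) \<le> 0) \<longleftrightarrow> (\<forall>i. (D *v x) $ i \<in> hsel (v $ i))"
proof
  assume H: "\<forall>y\<in>?X. v \<bullet> (y - x) \<le> 0"
  show "\<forall>i. (D *v x) $ i \<in> hsel (v $ i)"
  proof
    fix i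
    have Dp: "D $ i $ i > 0" using D by (simp add: pos_diag_def)
    show "(D *v x) $ i \<in> hsel (v $ i)"
    proof (rule hsel_var_conv)
      show "0 \<le> (D *v x) $ i" "(D *v x) $ i \<le> 1" using xX by auto
      fix e :: real assume e: "0 \<le> e" "e \<le> 1"
      define s where "s = (e - (D *v x) $ i) / D $ i $ i"
      define y where "y = x + s *\<^sub>R axis i 1"
      have Dy: "(D *v y) $ j = (if j = i then e else (D *v x) $ j)" for j
        using Dp by (simp add: diag_mv[OF D] y_def s_def axis_def field_simps)
      have "y \<in> ?X" using xX e by (simp add: Dy)
      with H have "v \<bullet> (y - x) \<le> 0" by blast
      also have "v \<bullet> (y - x) = s * v $ i" by (simp add: y_def inner_axis)
      finally have "(v $ i * (e - (D *v x) $ i)) / D $ i $ i \<le> 0" by (simp add: s_def mult.commute)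
      then show "v $ i * (e - (D *v x) $ i) \<le> 0" using Dp by (simp add: divide_le_0_iff)
    qed
  qed
next
  assume H: "\<forall>i. (D *v x) $ i \<in> hsel (v $ i)"
  show "\<forall>y\<in>?X. v \<bullet> (y - x) \<le> 0"
  proof
    fix y assume yX: "y \<in> ?X"
    have "v \<bullet> (y - x) = (\<Sum>i\<in>UNIV. v $ i * (y $ i - x $ i))" by (simp add: inner_vec_def)
    also have "\<dots> \<le> 0"
    proof (rule sum_nonpos)
      fix i
      have Dp: "D $ i $ i > 0" using D by (simp add: pos_diag_def)
      have "v $ i * ((D *v y) $ i - (D *v x) $ i) \<le> 0"
        using hsel_var[OF H[rule_format, of i]] yX by auto
      then have "v $ i * (y $ i - x $ i) * D $ i $ i \<le> 0"
        by (simp add: diag_mv[OF D] algebra_simps)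
      then show "v $ i * (y $ i - x $ i) \<le> 0" using Dp by (simp add: mult_le_0_iff)
    qed
    finally show "v \<bullet> (y - x) \<le> 0" .
  qed
qed

lemma proj_char:
  fixes X :: "'a::euclidean_space set"
  assumes xX: "x \<in> X"
  shows "proj_tangent X x v = 0 \<longleftrightarrow> (\<forall>y\<in>X. v \<bullet> (y - x) \<le> 0)"
proof -
  define S where "S = {c *\<^sub>R (y - x) | c y. c \<ge> 0 \<and> y \<in> X}"
  have T: "tangent_cone X x = closure S" by (simp add: tangent_cone_def S_def)
  have "(0::'a) = 0 *\<^sub>R (x - x) \<and> (0::real) \<ge> 0 \<and> x \<in> X" using xX by simp
  then have "0 \<in> S" unfolding S_def by blast
  then have T0: "0 \<in> closure S" using closure_subset by blast
  have cl: "closed (closure S)" by simp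
  have ne: "closure S \<noteq> {}" using T0 by (metis empty_iff)
  define p where "p = closest_point (closure S) v"
  have pT: "p \<in> closure S" unfolding p_def by (rule closest_point_in_set[OF cl ne])
  have ple: "dist v p \<le> dist v t" if "t \<in> closure S" for t
    unfolding p_def by (rule closest_point_le[OF cl that])
  have P: "proj_tangent X x v = p" by (simp add: proj_tangent_def T p_def)
  show ?thesis
  proof
    assume "proj_tangent X x v = 0"
    then have p0: "p = 0" using P by simp
    show "\<forall>y\<in>X. v \<bullet> (y - x) \<le> 0"
    proof (rule ccontr)
      assume "\<not> (\<forall>y\<in>X. v \<bullet> (y - x) \<le> 0)"
      then obtain y where yX: "y \<in> X" and pos: "v \<bullet> (y - x) > 0" by force
      define w where "w = y - x"
      have "w \<noteq> 0" using pos w_def by auto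
      then have ww: "w \<bullet> w > 0" by simp
      define c where "c = (v \<bullet> w) / (w \<bullet> w)"
      have c0: "c > 0" using pos ww by (simp add: c_def w_def)
      have "c *\<^sub>R w = c *\<^sub>R (y - x) \<and> c \<ge> 0 \<and> y \<in> X" using c0 yX w_def by simp
      then have "c *\<^sub>R w \<in> S" unfolding S_def by blast
      then have "dist v p \<le> dist v (c *\<^sub>R w)" using ple closure_subset by blast
      then have "norm v \<le> norm (v - c *\<^sub>R w)" by (simp add: p0 dist_norm)
      then have "norm v ^ 2 \<le> norm (v - c *\<^sub>R w) ^ 2" by (simp add: power_mono)
      then have "v \<bullet> v \<le> (v - c *\<^sub>R w) \<bullet> (v - c *\<^sub>R w)" by (simp add: power2_norm_eq_inner)
      moreover have "(v - c *\<^sub>R w) \<bullet> (v - c *\<^sub>R w) = v \<bullet> v - 2 * c * (v \<bullet> w) + c * c * (w \<bullet> w)"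
        by (simp add: inner_diff_left inner_diff_right inner_commute[of w v] algebra_simps)
      ultimately have "v \<bullet> v \<le> v \<bullet> v - 2 * c * (v \<bullet> w) + c * c * (w \<bullet> w)" by simp
      moreover have "c * (w \<bullet> w) = v \<bullet> w" using ww by (simp add: c_def)
      ultimately have "2 * c * (v \<bullet> w) \<le> c * (v \<bullet> w)" by (simp add: algebra_simps)
      moreover have "c * (v \<bullet> w) > 0" using c0 pos w_def by simp
      ultimately show False by linarith
    qed
  next
    assume H: "\<forall>y\<in>X. v \<bullet> (y - x) \<le> 0"
    have "S \<subseteq> {t. v \<bullet> t \<le> 0}"
      using H unfolding S_def by (auto simp: mult_nonneg_nonpos)
    moreover have "closed {t. v \<bullet> t \<le> 0}" by (rule closed_halfspace_le)
    ultimately have "closure S \<subseteq> {t. v \<bullet> t \<le> 0}" by (rule closure_minimal)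
    then have vp: "v \<bullet> p \<le> 0" using pT by blast
    have "dist v p \<le> dist v 0" using ple T0 by blast
    then have "norm (v - p) \<le> norm v" by (simp add: dist_norm)
    then have "norm (v - p) ^ 2 \<le> norm v ^ 2" by (simp add: power_mono)
    then have "(v - p) \<bullet> (v - p) \<le> v \<bullet> v" by (simp add: power2_norm_eq_inner)
    moreover have "(v - p) \<bullet> (v - p) = v \<bullet> v - 2 * (v \<bullet> p) + p \<bullet> p"
      by (simp add: inner_diff_left inner_diff_right inner_commute[of p v])
    ultimately have "v \<bullet> v - 2 * (v \<bullet> p) + p \<bullet> p \<le> v \<bullet> v" by simp
    then have "p \<bullet> p \<le> 0" using vp by linarith
    then have "p = 0" by (meson inner_eq_zero_iff inner_ge_zero order_antisym)
    then show "proj_tangent X x v = 0" using P by simp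
  qed
qed


lemma vec0: "((0::real^'n) = - a + b) \<longleftrightarrow> (\<forall>i. b $ i = a $ i)"
  by (auto simp: vec_eq_iff)

lemma lds_form:
  fixes A L :: "real^'n^'n"
  assumes L: "pos_diag L"
  shows "z \<bullet> ((transpose A ** L + L ** A) *v z) = 2 * (\<Sum>i\<in>UNIV. L $ i $ i * z $ i * (A *v z) $ i)"
proof -
  have 1: "z \<bullet> ((transpose A ** L) *v z) = (A *v z) \<bullet> (L *v z)"
    by (metis dot_lmul_matrix matrix_vector_mul_assoc vector_transpose_matrix)
  have 2: "z \<bullet> ((L ** A) *v z) = z \<bullet> (L *v (A *v z))"
    by (simp add: matrix_vector_mul_assoc)
  have 3: "(A *v z) \<bullet> (L *v z) = (\<Sum>i\<in>UNIV. L $ i $ i * z $ i * (A *v z) $ i)"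
    by (simp add: inner_vec_def diag_mv[OF L] algebra_simps)
  have 4: "z \<bullet> (L *v (A *v z)) = (\<Sum>i\<in>UNIV. L $ i $ i * z $ i * (A *v z) $ i)"
    by (simp add: inner_vec_def diag_mv[OF L] algebra_simps)
  show ?thesis
    by (simp add: matrix_vector_mult_add_rdistrib inner_add_right 1 2 3 4)
qed

theorem proposition7:
  fixes D W :: "real^'n^'n" and u :: "real^'n"
  assumes "pos_diag D"
  defines "A \<equiv> W - D"
    and "X \<equiv> {x :: real^'n. \<forall>i. 0 \<le> (D *v x) $ i \<and> (D *v x) $ i \<le> 1}"
  shows "(\<forall>x\<in>X. (0 \<in> (\<lambda>y. - (D *v x) + y) ` Hsel (A *v x + u))
                 \<longleftrightarrow> 0 = - (D *v x) + clip01 (W *v x + u))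
       \<and> (\<forall>x\<in>X. \<forall>\<tau>::real. \<tau> > 0 \<longrightarrow>
              ((0 = (1 / \<tau>) *\<^sub>R (- (D *v x) + clip01 (D *v x + \<tau> *\<^sub>R (A *v x + u))))
                 \<longleftrightarrow> 0 \<in> (\<lambda>y. - (D *v x) + y) ` Hsel (A *v x + u)))
       \<and> (\<forall>x\<in>X. (proj_tangent X x (A *v x + u) = 0)
                 \<longleftrightarrow> 0 \<in> (\<lambda>y. - (D *v x) + y) ` Hsel (A *v x + u))
       \<and> (lyap_diag_stable A \<longrightarrow>
              (\<exists>!x. 0 \<in> (\<lambda>y. - (D *v x) + y) ` Hsel (A *v x + u)))"
proof (intro conjI)
  have Dp: "\<And>i. D $ i $ i > 0" using assms(1) by (simp add: pos_diag_def)
  have WA: "\<And>x. W *v x = A *v x + D *v x" by (simp add: A_def matrix_vector_mult_diff_rdistrib)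
  show "\<forall>x\<in>X. (0 \<in> (\<lambda>y. - (D *v x) + y) ` Hsel (A *v x + u))
                 \<longleftrightarrow> 0 = - (D *v x) + clip01 (W *v x + u)"
  proof
    fix x assume xX: "x \<in> X"
    have "(0 = - (D *v x) + clip01 (W *v x + u)) \<longleftrightarrow>
          (\<forall>i. max 0 (min ((D *v x) $ i + 1 * (A *v x + u) $ i) 1) = (D *v x) $ i)"
      by (auto simp: clip01_def WA algebra_simps vec_eq_iff)
    also have "\<dots> \<longleftrightarrow> (\<forall>i. (D *v x) $ i \<in> hsel ((A *v x + u) $ i))"
    proof (intro iff_allI)
      fix i
      have "0 \<le> (D *v x) $ i" "(D *v x) $ i \<le> 1" using xX unfolding X_def by auto
      then show "max 0 (min ((D *v x) $ i + 1 * (A *v x + u) $ i) 1) = (D *v x) $ i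
          \<longleftrightarrow> (D *v x) $ i \<in> hsel ((A *v x + u) $ i)"
        using scal_clip[of "(D *v x) $ i" 1 "(A *v x + u) $ i"] zero_less_one by blast
    qed
    finally show "(0 \<in> (\<lambda>y. - (D *v x) + y) ` Hsel (A *v x + u))
                 \<longleftrightarrow> 0 = - (D *v x) + clip01 (W *v x + u)"
      using eq_char[of D x "A *v x + u"] by blast
  qed
  show "\<forall>x\<in>X. \<forall>\<tau>::real. \<tau> > 0 \<longrightarrow>
              ((0 = (1 / \<tau>) *\<^sub>R (- (D *v x) + clip01 (D *v x + \<tau> *\<^sub>R (A *v x + u))))
                 \<longleftrightarrow> 0 \<in> (\<lambda>y. - (D *v x) + y) ` Hsel (A *v x + u))"
  proof (intro ballI allI impI)
    fix x and t :: real assume xX: "x \<in> X" and t: "t > 0"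
    have "(0 = (1 / t) *\<^sub>R (- (D *v x) + clip01 (D *v x + t *\<^sub>R (A *v x + u)))) \<longleftrightarrow>
          (0 = (- (D *v x) + clip01 (D *v x + t *\<^sub>R (A *v x + u))))"
    proof -
      have c: "1 / t \<noteq> 0" using t by simp
      show ?thesis using c scaleR_eq_0_iff[of "1 / t" "- (D *v x) + clip01 (D *v x + t *\<^sub>R (A *v x + u))"]
        by (metis (mono_tags))
    qed
    also have "\<dots> \<longleftrightarrow>
          (\<forall>i. max 0 (min ((D *v x) $ i + t * (A *v x + u) $ i) 1) = (D *v x) $ i)"
      by (auto simp: clip01_def vec_eq_iff)
    also have "\<dots> \<longleftrightarrow> (\<forall>i. (D *v x) $ i \<in> hsel ((A *v x + u) $ i))"
    proof (intro iff_allI)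
      fix i
      have "0 \<le> (D *v x) $ i" "(D *v x) $ i \<le> 1" using xX unfolding X_def by auto
      then show "max 0 (min ((D *v x) $ i + t * (A *v x + u) $ i) 1) = (D *v x) $ i
          \<longleftrightarrow> (D *v x) $ i \<in> hsel ((A *v x + u) $ i)"
        using scal_clip[of "(D *v x) $ i" t "(A *v x + u) $ i"] t by blast
    qed
    finally show "(0 = (1 / t) *\<^sub>R (- (D *v x) + clip01 (D *v x + t *\<^sub>R (A *v x + u))))
                 \<longleftrightarrow> 0 \<in> (\<lambda>y. - (D *v x) + y) ` Hsel (A *v x + u)"
      using eq_char[of D x "A *v x + u"] by blast
  qed
  show "\<forall>x\<in>X. (proj_tangent X x (A *v x + u) = 0)
                 \<longleftrightarrow> 0 \<in> (\<lambda>y. - (D *v x) + y) ` Hsel (A *v x + u)"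
  proof
    fix x assume xX: "x \<in> X"
    show "(proj_tangent X x (A *v x + u) = 0)
                 \<longleftrightarrow> 0 \<in> (\<lambda>y. - (D *v x) + y) ` Hsel (A *v x + u)"
      unfolding proj_char[OF xX] eq_char using var_char[OF assms(1)] xX unfolding X_def by blast
  qed
  show "lyap_diag_stable A \<longrightarrow> (\<exists>!x. 0 \<in> (\<lambda>y. - (D *v x) + y) ` Hsel (A *v x + u))"
  proof
    assume lds: "lyap_diag_stable A"
    define S where "S = cbox (0::real^'n) (\<chi> i. 1 / D $ i $ i)"
    define f where "f = (\<lambda>x::real^'n. \<chi> i. max 0 (min ((W *v x + u) $ i) 1) / D $ i $ i)"
    have "compact S" "convex S" by (simp_all add: S_def)
    moreover have "S \<noteq> {}"
    proof -
      have "0 \<in> S" unfolding S_def mem_box_cart using Dp by (simp add: less_imp_le)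
      then show ?thesis by (metis empty_iff)
    qed
    moreover have "continuous_on S f" unfolding f_def
      by (intro continuous_intros) (auto simp: Dp less_imp_neq[OF Dp, symmetric])
    moreover have "f \<in> S \<rightarrow> S"
    proof
      fix x assume "x \<in> S"
      show "f x \<in> S" unfolding S_def mem_box_cart f_def
        using Dp by (auto intro!: divide_right_mono simp: less_imp_le)
    qed
    ultimately obtain x where "x \<in> S" "f x = x" by (rule brouwer)
    have fx: "(D *v x) $ i = max 0 (min ((D *v x) $ i + 1 * (A *v x + u) $ i) 1)" for i
    proof -
      have "f x $ i = x $ i" by (simp add: \<open>f x = x\<close>)
      then have "max 0 (min ((W *v x + u) $ i) 1) / D $ i $ i = x $ i" by (simp add: f_def)
      then have "max 0 (min ((W *v x + u) $ i) 1) = D $ i $ i * x $ i"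
        using Dp[of i] by (simp add: divide_eq_eq mult.commute)
      moreover have "(W *v x + u) $ i = (D *v x) $ i + 1 * (A *v x + u) $ i" by (simp add: WA)
      ultimately show ?thesis by (simp add: diag_mv[OF assms(1)])
    qed
    have ex: "\<forall>i. (D *v x) $ i \<in> hsel ((A *v x + u) $ i)"
    proof
      fix i
      have "0 \<le> (D *v x) $ i" "(D *v x) $ i \<le> 1" using fx[of i] by linarith+
      then show "(D *v x) $ i \<in> hsel ((A *v x + u) $ i)"
        using scal_clip[of "(D *v x) $ i" 1 "(A *v x + u) $ i"] fx[of i] by simp
    qed
    have uniq: "x1 = x2" if h1: "\<forall>i. (D *v x1) $ i \<in> hsel ((A *v x1 + u) $ i)"
       and h2: "\<forall>i. (D *v x2) $ i \<in> hsel ((A *v x2 + u) $ i)" for x1 x2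
    proof (rule ccontr)
      assume ne: "x1 \<noteq> x2"
      define z where "z = x1 - x2"
      have z0: "z \<noteq> 0" using ne z_def by simp
      obtain L where L: "pos_diag L" and neg: "\<And>z. z \<noteq> 0 \<Longrightarrow> z \<bullet> ((transpose A ** L + L ** A) *v z) < 0"
        using lds unfolding lyap_diag_stable_def by blast
      have "0 \<le> L $ i $ i * z $ i * (A *v z) $ i" for i
      proof -
        have "0 \<le> ((D *v x1) $ i - (D *v x2) $ i) * ((A *v x1 + u) $ i - (A *v x2 + u) $ i)"
          using hsel_mono h1 h2 by blast
        also have "\<dots> = D $ i $ i * (z $ i * (A *v z) $ i)"
          by (simp add: z_def diag_mv[OF assms(1)] matrix_vector_mult_diff_distrib algebra_simps)
        finally have "0 \<le> z $ i * (A *v z) $ i" using Dp[of i] by (simp add: zero_le_mult_iff)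
        moreover have "L $ i $ i > 0" using L by (simp add: pos_diag_def)
        ultimately show ?thesis by (simp add: mult.assoc)
      qed
      then have "0 \<le> (\<Sum>i\<in>UNIV. L $ i $ i * z $ i * (A *v z) $ i)" by (simp add: sum_nonneg)
      then have "0 \<le> z \<bullet> ((transpose A ** L + L ** A) *v z)" by (simp add: lds_form[OF L])
      with neg[OF z0] show False by simp
    qed
    show "\<exists>!x. 0 \<in> (\<lambda>y. - (D *v x) + y) ` Hsel (A *v x + u)"
      unfolding eq_char using ex uniq by blast
  qed
qed

end
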